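(* Consider the sparse linear Gaussian model: $S\in\{1,\dots,N\}$, $\mathcal{X}_S=\{\mathbf{x}\in\mathbb{R}^N:\|\mathbf{x}\|_0\le S\}$, $\mathbf{H}\in\mathbb{R}^{M\times N}$ with $\operatorname{spark}(\mathbf{H})>S$, $\sigma>0$, observation $\mathbf{y}=\mathbf{H}\mathbf{x}+\mathbf{n}$, $\mathbf{n}\sim\mathcal{N}(\mathbf{0},\sigma^2\mathbf{I})$, parameter function $g(\mathbf{x})=x_k$ for fixed $k\in[N]$. Let $\mathbf{x}_0\in\mathcal{X}_S$ and let $\mathcal{K}=\{k_1,\dots,k_{|\mathcal{K}|}\}\subseteq[N]$ with $|\mathcal{K}|\le S$. Let $\mathbf{P}=\mathbf{H}_{\mathcal{K}}(\mathbf{H}_{\mathcal{K}})^{\dagger}$ and let $\widetilde{\mathbf{x}}_0\in\mathbb{R}^N$ be the unique vector with $\operatorname{supp}(\widetilde{\mathbf{x}}_0)\subseteq\mathcal{K}$ satisfying $\mathbf{H}\widetilde{\mathbf{x}}_0=\mathbf{P}\mathbf{H}\mathbf{x}_0$. Let $c:\mathcal{X}_S\to\mathbb{R}$ be a bias function such that the partial derivatives $\frac{\partial c(\mathbf{x})}{\partial x_{k_i}}\big|_{\mathbf{x}=\widetilde{\mathbf{x}}_0}$ exist for all $k_i\in\mathcal{K}$, let $\gamma(\mathbf{x})=c(\mathbf{x})+x_k$, and define $\mathbf{b}_{\mathbf{x}_0}\in\mathbb{R}^{|\mathcal{K}|}$ by $(\mathbf{b}_{\mathbf{x}_0})_i=\delta_{k,k_i}+\frac{\partial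 c(\mathbf{x})}{\partial x_{k_i}}\big|_{\mathbf{x}=\widetilde{\mathbf{x}}_0}$. Then $$M(c,\mathbf{x}_0)\ \ge\ \exp\Big(-\tfrac{1}{\sigma^2}\|(\mathbf{I}-\mathbf{P})\mathbf{H}\mathbf{x}_0\|_2^2\Big)\Big[\sigma^2\mathbf{b}_{\mathbf{x}_0}^T(\mathbf{H}_{\mathcal{K}}^T\mathbf{H}_{\mathcal{K}})^{-1}\mathbf{b}_{\mathbf{x}_0}+\gamma^2(\widetilde{\mathbf{x}}_0)\Big]-\gamma^2(\mathbf{x}_0).$$
   Context: $\mathbf{H}_{\mathcal{K}}$ is the submatrix of columns of $\mathbf{H}$ indexed by $\mathcal{K}$; $\dagger$ = pseudoinverse; $\delta$ is the Kronecker delta; $\operatorname{supp}$ = set of indices of nonzero entries. An estimator $\hat g:\mathbb{R}^M\to\mathbb{R}$ has bias $b(\hat g;\mathbf{x})=\mathsf{E}_{\mathbf{x}}\{\hat g(\mathbf{y})\}-x_k$ and variance $v(\hat g;\mathbf{x})$; $M(c,\mathbf{x}_0)$ is the infimum of $v(\hat g;\mathbf{x}_0)$ over all estimators with $v(\hat g;\mathbf{x}_0)<\infty$ and $b(\hat g;\mathbf{x})=c(\mathbf{x})$ for all $\mathbf{x}\in\mathcal{X}_S$ (and $+\infty$ if there is none). *)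

theory Defs
  imports "HOL-Probability.Probability" "Jordan_Normal_Form.Matrix"
begin

text \<open>Vectors in R^N are JNF vectors of dimension N (indices 0..N-1); matrices are JNF
  matrices. Observations y in R^M are functions on {..<M} (elements of a finite product space).\<close>

definition supp_vec :: "real vec \<Rightarrow> nat set" where
  "supp_vec x = {i. i < dim_vec x \<and> x $ i \<noteq> 0}"

definition sparse_set :: "nat \<Rightarrow> nat \<Rightarrow> real vec set" where
  "sparse_set N S = {x \<in> carrier_vec N. card (supp_vec x) \<le> S}"

text \<open>spark(H): smallest number of linearly dependent columns, i.e. the minimal
  number of nonzero entries of a nonzero null-space vector (infinity if there is none).\<close>
definition spark :: "real mat \<Rightarrow> enat" where
  "spark H = (INF x \<in> {x \<in> carrier_vec (dim_col H). x \<noteq> 0\<^sub>v (dim_col H) \<and> H *\<^sub>v x = 0\<^sub>v (dim_row H)}.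
                 enat (card (supp_vec x)))"

definition pinv :: "real mat \<Rightarrow> real mat" where
  "pinv A = (THE B. B \<in> carrier_mat (dim_col A) (dim_row A) \<and> A * B * A = A \<and> B * A * B = B
       \<and> transpose_mat (A * B) = A * B \<and> transpose_mat (B * A) = B * A)"

definition mat_inv :: "real mat \<Rightarrow> real mat" where
  "mat_inv A = (THE B. B \<in> carrier_mat (dim_row A) (dim_row A) \<and> A * B = 1\<^sub>m (dim_row A)
       \<and> B * A = 1\<^sub>m (dim_row A))"

definition cols_sub :: "real mat \<Rightarrow> nat set \<Rightarrow> real mat" where
  "cols_sub H K = mat (dim_row H) (card K) (\<lambda>(r, j). H $$ (r, sorted_list_of_set K ! j))"

definition obs_measure :: "real mat \<Rightarrow> real \<Rightarrow> real vec \<Rightarrow> (nat \<Rightarrow> real) measure" where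
  "obs_measure H \<sigma> x = PiM {..<dim_row H} (\<lambda>i. density lborel (normal_density ((H *\<^sub>v x) $ i) \<sigma>))"

definition expect :: "real mat \<Rightarrow> real \<Rightarrow> real vec \<Rightarrow> ((nat \<Rightarrow> real) \<Rightarrow> real) \<Rightarrow> real" where
  "expect H \<sigma> x g = (\<integral>y. g y \<partial>obs_measure H \<sigma> x)"

definition est_variance :: "real mat \<Rightarrow> real \<Rightarrow> real vec \<Rightarrow> ((nat \<Rightarrow> real) \<Rightarrow> real) \<Rightarrow> real" where
  "est_variance H \<sigma> x g = (\<integral>y. (g y - expect H \<sigma> x g)\<^sup>2 \<partial>obs_measure H \<sigma> x)"

definition admissible_est ::
  "real mat \<Rightarrow> real \<Rightarrow> nat \<Rightarrow> nat \<Rightarrow> (real vec \<Rightarrow> real) \<Rightarrow> real vec \<Rightarrow> ((nat \<Rightarrow> real) \<Rightarrow> real) set" where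
  "admissible_est H \<sigma> S k c x0 = {g.
     g \<in> borel_measurable (obs_measure H \<sigma> x0) \<and>
     integrable (obs_measure H \<sigma> x0) (\<lambda>y. (g y)\<^sup>2) \<and>
     (\<forall>x \<in> sparse_set (dim_col H) S. integrable (obs_measure H \<sigma> x) g \<and>
         expect H \<sigma> x g - x $ k = c x)}"

text \<open>M(c, x0): infimum of variances; +infinity if no admissible estimator.\<close>
definition min_var :: "real mat \<Rightarrow> real \<Rightarrow> nat \<Rightarrow> nat \<Rightarrow> (real vec \<Rightarrow> real) \<Rightarrow> real vec \<Rightarrow> ereal" where
  "min_var H \<sigma> S k c x0 = (INF g \<in> admissible_est H \<sigma> S k c x0. ereal (est_variance H \<sigma> x0 g))"

end

theory Submission
  imports Defs "Jordan_Normal_Form.Determinant"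
begin


lemma PiM_density_prob:
  fixes N :: "'i \<Rightarrow> 'a measure" and f :: "'i \<Rightarrow> 'a \<Rightarrow> real"
  assumes I: "finite I"
    and N: "\<And>i. prob_space (N i)"
    and D: "\<And>i. prob_space (density (N i) (f i))"
    and fm[measurable]: "\<And>i. f i \<in> borel_measurable (N i)"
    and fnn: "\<And>i x. 0 \<le> f i x"
  shows "PiM I (\<lambda>i. density (N i) (f i)) = density (PiM I N) (\<lambda>x. \<Prod>i\<in>I. f i (x i))"
proof -
  interpret D: product_sigma_finite "\<lambda>i. density (N i) (f i)"
    unfolding product_sigma_finite_def using D prob_space_imp_sigma_finite by blast
  interpret N: product_sigma_finite N
    unfolding product_sigma_finite_def using N prob_space_imp_sigma_finite by blast
  have meas: "(\<lambda>x. \<Prod>i\<in>I. f i (x i)) \<in> borel_measurable (PiM I N)"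
    by measurable
  show ?thesis
  proof (rule D.PiM_eqI[symmetric, OF I])
    show "sets (density (Pi\<^sub>M I N) (\<lambda>x. \<Prod>i\<in>I. f i (x i))) = sets (Pi\<^sub>M I (\<lambda>i. density (N i) (f i)))"
      unfolding sets_density by (rule sets_PiM_cong) simp_all
  next
    fix A assume A: "\<And>i. i \<in> I \<Longrightarrow> A i \<in> sets (density (N i) (f i))"
    then have A': "\<And>i. i \<in> I \<Longrightarrow> A i \<in> sets (N i)" by simp
    have box: "Pi\<^sub>E I A \<in> sets (PiM I N)"
      using A' by (simp add: sets_PiM_I_finite I)
    have "emeasure (density (Pi\<^sub>M I N) (\<lambda>x. \<Prod>i\<in>I. f i (x i))) (Pi\<^sub>E I A)
        = (\<integral>\<^sup>+ x. ennreal (\<Prod>i\<in>I. f i (x i)) * indicator (Pi\<^sub>E I A) x \<partial>PiM I N)"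
      using box meas by (simp add: emeasure_density)
    also have "\<dots> = (\<integral>\<^sup>+ x. (\<Prod>i\<in>I. ennreal (f i (x i)) * indicator (A i) (x i)) \<partial>PiM I N)"
    proof (rule nn_integral_cong)
      fix x assume x: "x \<in> space (PiM I N)"
      then have ext: "x \<in> extensional I" by (simp add: space_PiM PiE_def)
      have "indicator (Pi\<^sub>E I A) x = (\<Prod>i\<in>I. indicator (A i) (x i) :: ennreal)"
        using ext I by (auto simp: indicator_def PiE_def Pi_def)
      then show "ennreal (\<Prod>i\<in>I. f i (x i)) * indicator (Pi\<^sub>E I A) x
          = (\<Prod>i\<in>I. ennreal (f i (x i)) * indicator (A i) (x i))"
        by (simp add: prod.distrib prod_ennreal fnn)
    qed
    also have "\<dots> = (\<Prod>i\<in>I. (\<integral>\<^sup>+ y. ennreal (f i y) * indicator (A i) y \<partial>N i))"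
      by (rule N.product_nn_integral_prod[OF I]) (use A' in measurable)
    also have "\<dots> = (\<Prod>i\<in>I. emeasure (density (N i) (f i)) (A i))"
      using A' by (intro prod.cong refl) (simp add: emeasure_density)
    finally show "emeasure (density (Pi\<^sub>M I N) (\<lambda>x. \<Prod>i\<in>I. f i (x i))) (Pi\<^sub>E I A)
        = (\<Prod>i\<in>I. emeasure (density (N i) (f i)) (A i))" .
  qed
qed

definition Qm :: "nat \<Rightarrow> real \<Rightarrow> (nat \<Rightarrow> real) \<Rightarrow> (nat \<Rightarrow> real) measure" where
  "Qm M \<sigma> a = PiM {..<M} (\<lambda>i. density lborel (normal_density (a i) \<sigma>))"

definition ell :: "real \<Rightarrow> real \<Rightarrow> real \<Rightarrow> real \<Rightarrow> real" where
  "ell \<sigma> m a x = exp (((x - m)\<^sup>2 - (x - a)\<^sup>2) / (2 * \<sigma>\<^sup>2))"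

definition LR :: "nat \<Rightarrow> real \<Rightarrow> (nat \<Rightarrow> real) \<Rightarrow> (nat \<Rightarrow> real) \<Rightarrow> (nat \<Rightarrow> real) \<Rightarrow> real" where
  "LR M \<sigma> m a y = (\<Prod>i<M. ell \<sigma> (m i) (a i) (y i))"

lemma normal_density_ell:
  "normal_density a \<sigma> x = normal_density m \<sigma> x * ell \<sigma> m a x"
proof -
  have "exp (- (x - a)\<^sup>2 / (2 * \<sigma>\<^sup>2)) = exp (- (x - m)\<^sup>2 / (2 * \<sigma>\<^sup>2)) * exp (((x - m)\<^sup>2 - (x - a)\<^sup>2) / (2 * \<sigma>\<^sup>2))"
    unfolding mult_exp_exp by (rule arg_cong[where f=exp]) (simp add: diff_divide_distrib)
  then show ?thesis unfolding normal_density_def ell_def by simp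
qed

lemma prob_space_Qm: "\<sigma> > 0 \<Longrightarrow> prob_space (Qm M \<sigma> a)"
  unfolding Qm_def by (intro prob_space_PiM prob_space_normal_density)

lemma Qm_density:
  assumes s: "\<sigma> > 0"
  shows "Qm M \<sigma> a = density (Qm M \<sigma> m) (LR M \<sigma> m a)"
proof -
  have eq: "density lborel (normal_density (a i) \<sigma>)
      = density (density lborel (normal_density (m i) \<sigma>)) (ell \<sigma> (m i) (a i))" for i
    by (subst density_density_eq) (auto simp: ell_def normal_density_ell[of "a i" \<sigma> _ "m i"] ennreal_mult'
        intro!: arg_cong2[where f=density] ext)
  have "Qm M \<sigma> a = PiM {..<M} (\<lambda>i. density (density lborel (normal_density (m i) \<sigma>)) (ell \<sigma> (m i) (a i)))"
    unfolding Qm_def eq ..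
  also have "\<dots> = density (Qm M \<sigma> m) (LR M \<sigma> m a)"
    unfolding Qm_def LR_def
  proof (rule PiM_density_prob)
    fix i
    show "prob_space (density (density lborel (normal_density (m i) \<sigma>)) (ell \<sigma> (m i) (a i)))"
      unfolding eq[symmetric] using s by (rule prob_space_normal_density)
  qed (use s in \<open>auto simp: prob_space_normal_density ell_def\<close>)
  finally show ?thesis .
qed

lemma LR_nonneg: "0 \<le> LR M \<sigma> m a y"
  unfolding LR_def ell_def by (intro prod_nonneg) auto

lemma LR_measurable[measurable]: "LR M \<sigma> m a \<in> borel_measurable (Qm M \<sigma> m')"
  unfolding LR_def Qm_def ell_def by measurable

lemma LR_mult:
  assumes s0: "\<sigma> \<noteq> 0"
  shows "LR M \<sigma> m a y * LR M \<sigma> m b y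
     = exp ((\<Sum>i<M. (a i - m i) * (b i - m i)) / \<sigma>\<^sup>2) * LR M \<sigma> m (\<lambda>i. a i + b i - m i) y"
proof -
  have "ell \<sigma> (m i) (a i) (y i) * ell \<sigma> (m i) (b i) (y i)
      = exp ((a i - m i) * (b i - m i) / \<sigma>\<^sup>2) * ell \<sigma> (m i) (a i + b i - m i) (y i)" for i
    unfolding ell_def mult_exp_exp
    by (rule arg_cong[where f=exp]) (use s0 in \<open>simp add: field_simps power2_eq_square\<close>)
  then show ?thesis
    unfolding LR_def by (simp add: prod.distrib[symmetric] exp_sum sum_divide_distrib)
qed

lemma LR_integral:
  assumes s: "\<sigma> > 0"
  shows "integrable (Qm M \<sigma> m) (LR M \<sigma> m a)" "(\<integral>y. LR M \<sigma> m a y \<partial>Qm M \<sigma> m) = 1"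
proof -
  interpret P: prob_space "Qm M \<sigma> a" using prob_space_Qm[OF s] .
  have "integrable (density (Qm M \<sigma> m) (LR M \<sigma> m a)) (\<lambda>_. 1::real)"
    unfolding Qm_density[OF s, symmetric] by simp
  then show "integrable (Qm M \<sigma> m) (LR M \<sigma> m a)"
    by (subst (asm) integrable_density) (auto simp: LR_nonneg)
  have "(\<integral>y. (1::real) \<partial>density (Qm M \<sigma> m) (LR M \<sigma> m a)) = 1"
    unfolding Qm_density[OF s, symmetric] by (simp add: P.prob_space)
  then show "(\<integral>y. LR M \<sigma> m a y \<partial>Qm M \<sigma> m) = 1"
    by (subst (asm) integral_density) (auto simp: LR_nonneg)
qed

lemma LR_change:
  assumes s: "\<sigma> > 0" and g: "g \<in> borel_measurable (Qm M \<sigma> m)" and gi: "integrable (Qm M \<sigma> a) g"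
  shows "integrable (Qm M \<sigma> m) (\<lambda>y. LR M \<sigma> m a y * g y)"
    "(\<integral>y. g y \<partial>Qm M \<sigma> a) = (\<integral>y. LR M \<sigma> m a y * g y \<partial>Qm M \<sigma> m)"
proof -
  show "integrable (Qm M \<sigma> m) (\<lambda>y. LR M \<sigma> m a y * g y)"
    using gi unfolding Qm_density[OF s, of M a m]
    by (subst (asm) integrable_density) (auto simp: LR_nonneg g)
  show "(\<integral>y. g y \<partial>Qm M \<sigma> a) = (\<integral>y. LR M \<sigma> m a y * g y \<partial>Qm M \<sigma> m)"
    unfolding Qm_density[OF s, of M a m]
    by (subst integral_density) (auto simp: LR_nonneg g)
qed

lemma LR_prod_integral:
  assumes s: "\<sigma> > 0"
  shows "integrable (Qm M \<sigma> m) (\<lambda>y. LR M \<sigma> m a y * LR M \<sigma> m b y)"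
    "(\<integral>y. LR M \<sigma> m a y * LR M \<sigma> m b y \<partial>Qm M \<sigma> m) = exp ((\<Sum>i<M. (a i - m i) * (b i - m i)) / \<sigma>\<^sup>2)"
  unfolding LR_mult[OF less_imp_neq[OF s, symmetric]] using LR_integral[OF s, of M m "\<lambda>i. a i + b i - m i"] by auto

lemma sq_expand:
  fixes A x :: real and c y :: "nat \<Rightarrow> real"
  shows "(A * x + (\<Sum>i<n. c i * y i))\<^sup>2
    = A\<^sup>2 * (x * x) + 2 * A * (\<Sum>i<n. c i * (x * y i)) + (\<Sum>i<n. \<Sum>j<n. c i * c j * (y i * y j))"
proof -
  have "(\<Sum>i<n. c i * y i) * (\<Sum>i<n. c i * y i) = (\<Sum>i<n. \<Sum>j<n. c i * c j * (y i * y j))"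
    by (simp add: sum_product mult_ac)
  moreover have "x * (\<Sum>i<n. c i * y i) = (\<Sum>i<n. c i * (x * y i))"
    by (simp add: sum_distrib_left mult_ac)
  ultimately show ?thesis
    by (simp add: power2_eq_square algebra_simps)
qed

lemma quad_bound:
  fixes g :: "(nat \<Rightarrow> real) \<Rightarrow> real" and p0 m :: "nat \<Rightarrow> real" and p :: "nat \<Rightarrow> nat \<Rightarrow> real"
    and A :: real and c :: "nat \<Rightarrow> real"
  assumes s: "\<sigma> > 0"
    and gm[measurable]: "g \<in> borel_measurable (Qm M \<sigma> m)"
    and g2: "integrable (Qm M \<sigma> m) (\<lambda>y. (g y)\<^sup>2)"
    and g0: "integrable (Qm M \<sigma> p0) g"
    and gi: "\<And>i. i < n \<Longrightarrow> integrable (Qm M \<sigma> (p i)) g"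
  defines "E \<equiv> \<lambda>a b. exp ((\<Sum>l<M. (a l - m l) * (b l - m l)) / \<sigma>\<^sup>2)"
  shows "(\<integral>y. (g y)\<^sup>2 \<partial>Qm M \<sigma> m) \<ge>
    2 * (A * (\<integral>y. g y \<partial>Qm M \<sigma> p0) + (\<Sum>i<n. c i * (\<integral>y. g y \<partial>Qm M \<sigma> (p i))))
    - (A\<^sup>2 * E p0 p0 + 2 * A * (\<Sum>i<n. c i * E p0 (p i)) + (\<Sum>i<n. \<Sum>j<n. c i * c j * E (p i) (p j)))"
proof -
  let ?Q = "Qm M \<sigma> m"
  define L where "L = (\<lambda>a y. LR M \<sigma> m a y)"
  define h where "h = (\<lambda>y. A * L p0 y + (\<Sum>i<n. c i * L (p i) y))"
  have Lg: "integrable ?Q (\<lambda>y. L a y * g y)" "(\<integral>y. g y \<partial>Qm M \<sigma> a) = (\<integral>y. L a y * g y \<partial>?Q)"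
    if "integrable (Qm M \<sigma> a) g" for a
    using LR_change[OF s _ that, of m] gm unfolding L_def by auto
  have LL: "integrable ?Q (\<lambda>y. L a y * L b y)" "(\<integral>y. L a y * L b y \<partial>?Q) = E a b" for a b
    using LR_prod_integral[OF s, of M m a b] unfolding L_def E_def by auto
  have gh_eq: "g y * h y = A * (L p0 y * g y) + (\<Sum>i<n. c i * (L (p i) y * g y))" for y
    unfolding h_def by (simp add: algebra_simps sum_distrib_left)
  have gh_int: "integrable ?Q (\<lambda>y. g y * h y)"
    unfolding gh_eq using Lg(1)[OF g0] Lg(1)[OF gi] by (intro Bochner_Integration.integrable_add Bochner_Integration.integrable_mult_right Bochner_Integration.integrable_sum) auto
  have gh_val: "(\<integral>y. g y * h y \<partial>?Q) = A * (\<integral>y. g y \<partial>Qm M \<sigma> p0) + (\<Sum>i<n. c i * (\<integral>y. g y \<partial>Qm M \<sigma> (p i)))"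
  proof -
    have "(\<integral>y. g y * h y \<partial>?Q) = A * (\<integral>y. L p0 y * g y \<partial>?Q) + (\<Sum>i<n. c i * (\<integral>y. L (p i) y * g y \<partial>?Q))"
      unfolding gh_eq using Lg(1)[OF g0] Lg(1)[OF gi]
      by (subst Bochner_Integration.integral_add)
         (auto intro!: Bochner_Integration.integrable_sum Bochner_Integration.integrable_mult_right
               simp: Bochner_Integration.integral_sum)
    also have "\<dots> = A * (\<integral>y. g y \<partial>Qm M \<sigma> p0) + (\<Sum>i<n. c i * (\<integral>y. g y \<partial>Qm M \<sigma> (p i)))"
      using Lg(2)[OF g0] Lg(2)[OF gi] by simp
    finally show ?thesis .
  qed
  have hh_eq: "(h y)\<^sup>2 = A\<^sup>2 * (L p0 y * L p0 y) + 2 * A * (\<Sum>i<n. c i * (L p0 y * L (p i) y))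
      + (\<Sum>i<n. \<Sum>j<n. c i * c j * (L (p i) y * L (p j) y))" for y
    unfolding h_def by (rule sq_expand)
  have hh_int: "integrable ?Q (\<lambda>y. (h y)\<^sup>2)"
    unfolding hh_eq using LL by (intro Bochner_Integration.integrable_add Bochner_Integration.integrable_mult_right Bochner_Integration.integrable_sum) auto
  have hh_val: "(\<integral>y. (h y)\<^sup>2 \<partial>?Q) = A\<^sup>2 * E p0 p0 + 2 * A * (\<Sum>i<n. c i * E p0 (p i)) + (\<Sum>i<n. \<Sum>j<n. c i * c j * E (p i) (p j))"
    unfolding hh_eq using LL
    by (simp add: Bochner_Integration.integral_add Bochner_Integration.integrable_add Bochner_Integration.integrable_sum Bochner_Integration.integral_sum Bochner_Integration.integrable_mult_right)
  have "0 \<le> (\<integral>y. (g y - h y)\<^sup>2 \<partial>?Q)" by (rule integral_nonneg_AE) auto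
  also have "(\<lambda>y. (g y - h y)\<^sup>2) = (\<lambda>y. (g y)\<^sup>2 - 2 * (g y * h y) + (h y)\<^sup>2)"
    by (simp add: power2_eq_square algebra_simps)
  also have "(\<integral>y. (g y)\<^sup>2 - 2 * (g y * h y) + (h y)\<^sup>2 \<partial>?Q)
      = (\<integral>y. (g y)\<^sup>2 \<partial>?Q) - 2 * (\<integral>y. g y * h y \<partial>?Q) + (\<integral>y. (h y)\<^sup>2 \<partial>?Q)"
    using g2 gh_int hh_int by (simp add: Bochner_Integration.integral_add Bochner_Integration.integral_diff Bochner_Integration.integrable_diff)
  finally show ?thesis unfolding gh_val hh_val by linarith
qed




lemma spark_zero:
  assumes H: "H \<in> carrier_mat M N" and sp: "enat S < spark H"
    and d: "d \<in> carrier_vec N" and Hd: "H *\<^sub>v d = 0\<^sub>v M" and c: "card (supp_vec d) \<le> S"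
  shows "d = 0\<^sub>v N"
proof (rule ccontr)
  assume nz: "d \<noteq> 0\<^sub>v N"
  have "spark H \<le> enat (card (supp_vec d))"
    unfolding spark_def using H d Hd nz by (intro INF_lower) auto
  moreover have "enat (card (supp_vec d)) \<le> enat S" using c by simp
  ultimately have "spark H \<le> enat S" by (rule order_trans)
  then show False using sp by (simp add: leD)
qed

definition emb :: "nat \<Rightarrow> nat list \<Rightarrow> real vec \<Rightarrow> real vec" where
  "emb N ks \<theta> = vec N (\<lambda>j. \<Sum>i<length ks. if j = ks ! i then \<theta> $ i else 0)"

lemma emb_carrier[simp]: "emb N ks \<theta> \<in> carrier_vec N"
  unfolding emb_def by simp

lemma dim_emb[simp]: "dim_vec (emb N ks \<theta>) = N"
  unfolding emb_def by simp

lemma supp_emb: "supp_vec (emb N ks \<theta>) \<subseteq> set ks"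
proof
  fix j assume "j \<in> supp_vec (emb N ks \<theta>)"
  then have "(\<Sum>i<length ks. if j = ks ! i then \<theta> $ i else 0) \<noteq> 0"
    unfolding supp_vec_def emb_def by auto
  then have "\<exists>i<length ks. j = ks ! i"
  proof (rule contrapos_np)
    assume "\<not> (\<exists>i<length ks. j = ks ! i)"
    then show "(\<Sum>i<length ks. if j = ks ! i then \<theta> $ i else 0) = 0"
      by (intro sum.neutral) auto
  qed
  then show "j \<in> set ks" by auto
qed

lemma emb_nth:
  assumes "distinct ks" "i < length ks" "ks ! i < N"
  shows "emb N ks \<theta> $ (ks ! i) = \<theta> $ i"
proof -
  have "(\<Sum>i'<length ks. if ks ! i = ks ! i' then \<theta> $ i' else 0) = (\<Sum>i'<length ks. if i' = i then \<theta> $ i' else 0)"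
    using assms by (intro sum.cong refl) (auto simp: nth_eq_iff_index_eq)
  then show ?thesis using assms unfolding emb_def by simp
qed

lemma emb_mult:
  assumes H: "H \<in> carrier_mat M N" and ks: "set ks \<subseteq> {..<N}" and th: "\<theta> \<in> carrier_vec (length ks)"
  shows "H *\<^sub>v emb N ks \<theta> = mat M (length ks) (\<lambda>(r, j). H $$ (r, ks ! j)) *\<^sub>v \<theta>"
proof (rule eq_vecI)
  fix r assume "r < dim_vec (mat M (length ks) (\<lambda>(r, j). H $$ (r, ks ! j)) *\<^sub>v \<theta>)"
  then have r: "r < M" by simp
  have "(H *\<^sub>v emb N ks \<theta>) $ r = (\<Sum>j<N. H $$ (r, j) * (\<Sum>i<length ks. if j = ks ! i then \<theta> $ i else 0))"
    using H r unfolding emb_def by (simp add: scalar_prod_def atLeast0LessThan)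
  also have "\<dots> = (\<Sum>j<N. \<Sum>i<length ks. if j = ks ! i then H $$ (r, ks ! i) * \<theta> $ i else 0)"
    unfolding sum_distrib_left by (intro sum.cong refl) auto
  also have "\<dots> = (\<Sum>i<length ks. \<Sum>j<N. if j = ks ! i then H $$ (r, ks ! i) * \<theta> $ i else 0)"
    by (rule sum.swap)
  also have "\<dots> = (\<Sum>i<length ks. H $$ (r, ks ! i) * \<theta> $ i)"
  proof (intro sum.cong refl)
    fix i assume "i \<in> {..<length ks}"
    then have "ks ! i \<in> set ks" by simp
    then have "ks ! i < N" using ks by auto
    then show "(\<Sum>j<N. if j = ks ! i then H $$ (r, ks ! i) * \<theta> $ i else 0) = H $$ (r, ks ! i) * \<theta> $ i"
      by (subst sum.delta) auto
  qed
  also have "\<dots> = (mat M (length ks) (\<lambda>(r, j). H $$ (r, ks ! j)) *\<^sub>v \<theta>) $ r"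
    using r th by (simp add: scalar_prod_def atLeast0LessThan row_def)
  finally show "(H *\<^sub>v emb N ks \<theta>) $ r = (mat M (length ks) (\<lambda>(r, j). H $$ (r, ks ! j)) *\<^sub>v \<theta>) $ r" .
qed (use H in simp)


lemma self_scalar_zero:
  fixes w :: "real vec"
  assumes w: "w \<in> carrier_vec m" and z: "w \<bullet> w = 0"
  shows "w = 0\<^sub>v m"
proof -
  have "(\<Sum>i\<in>{0..<m}. w $ i * w $ i) = 0" using z w by (simp add: scalar_prod_def)
  then have "\<forall>i\<in>{0..<m}. w $ i * w $ i = 0"
    by (subst (asm) sum_nonneg_eq_0_iff) auto
  then show ?thesis using w by (intro eq_vecI) auto
qed

lemma gram_inv_exists:
  fixes A :: "real mat"
  assumes A: "A \<in> carrier_mat m n"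
    and inj: "\<And>\<theta>. \<theta> \<in> carrier_vec n \<Longrightarrow> A *\<^sub>v \<theta> = 0\<^sub>v m \<Longrightarrow> \<theta> = 0\<^sub>v n"
  shows "\<exists>B. B \<in> carrier_mat n n \<and> B * (transpose_mat A * A) = 1\<^sub>m n \<and> (transpose_mat A * A) * B = 1\<^sub>m n"
proof -
  define G where "G = transpose_mat A * A"
  have G: "G \<in> carrier_mat n n" using A unfolding G_def by simp
  have "det G \<noteq> 0"
  proof
    assume "det G = 0"
    then obtain v where v: "v \<in> carrier_vec n" "v \<noteq> 0\<^sub>v n" "G *\<^sub>v v = 0\<^sub>v n"
      using det_0_iff_vec_prod_zero[OF G] by auto
    have Av: "A *\<^sub>v v \<in> carrier_vec m" using A v by simp
    have "G *\<^sub>v v = transpose_mat A *\<^sub>v (A *\<^sub>v v)"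
      unfolding G_def using A v by (simp add: assoc_mult_mat_vec[of _ n m A n v])
    then have "(A *\<^sub>v v) \<bullet> (A *\<^sub>v v) = (G *\<^sub>v v) \<bullet> v"
      using transpose_vec_mult_scalar[OF A v(1) Av] by simp
    also have "\<dots> = 0" using v by simp
    finally have "A *\<^sub>v v = 0\<^sub>v m" by (rule self_scalar_zero[OF Av])
    then show False using inj v by auto
  qed
  from det_non_zero_imp_unit[OF G this]
  obtain B where "B \<in> carrier_mat n n" "B * G = 1\<^sub>m n" "G * B = 1\<^sub>m n"
    unfolding Units_def ring_mat_def by auto
  then show ?thesis unfolding G_def by blast
qed

lemma inv_unique:
  fixes G B B' :: "real mat"
  assumes G: "G \<in> carrier_mat n n" and B: "B \<in> carrier_mat n n" and B': "B' \<in> carrier_mat n n"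
    and BG: "B * G = 1\<^sub>m n" and GB': "G * B' = 1\<^sub>m n"
  shows "B = B'"
proof -
  have "B = B * (G * B')" using GB' B by simp
  also have "\<dots> = (B * G) * B'" using G B B' by simp
  also have "\<dots> = B'" using BG B' by simp
  finally show ?thesis .
qed

lemma mat_inv_eq:
  fixes G B :: "real mat"
  assumes G: "G \<in> carrier_mat n n" and B: "B \<in> carrier_mat n n"
    and BG: "B * G = 1\<^sub>m n" and GB: "G * B = 1\<^sub>m n"
  shows "mat_inv G = B"
  unfolding mat_inv_def
proof (rule the_equality)
  show "B \<in> carrier_mat (dim_row G) (dim_row G) \<and> G * B = 1\<^sub>m (dim_row G) \<and> B * G = 1\<^sub>m (dim_row G)"
    using assms by simp
  fix B' assume "B' \<in> carrier_mat (dim_row G) (dim_row G) \<and> G * B' = 1\<^sub>m (dim_row G) \<and> B' * G = 1\<^sub>m (dim_row G)"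
  then have B': "B' \<in> carrier_mat n n" "G * B' = 1\<^sub>m n" "B' * G = 1\<^sub>m n" using G by auto
  show "B' = B" using inv_unique[OF G B'(1) B B'(3) GB] .
qed

lemma inv_transpose_sym:
  fixes G B :: "real mat"
  assumes G: "G \<in> carrier_mat n n" and B: "B \<in> carrier_mat n n"
    and BG: "B * G = 1\<^sub>m n" and GB: "G * B = 1\<^sub>m n" and sym: "transpose_mat G = G"
  shows "transpose_mat B = B"
proof -
  have "transpose_mat (G * B) = transpose_mat B * transpose_mat G"
    using transpose_mult[OF G B] .
  then have "transpose_mat B * G = 1\<^sub>m n" using GB sym by simp
  then show ?thesis using inv_unique[of G n "transpose_mat B" B] G B GB by simp
qed

lemma pinv_eq:
  fixes A B :: "real mat"
  assumes A: "A \<in> carrier_mat m n" and B: "B \<in> carrier_mat n n"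
    and BG: "B * (transpose_mat A * A) = 1\<^sub>m n" and GB: "(transpose_mat A * A) * B = 1\<^sub>m n"
  shows "pinv A = B * transpose_mat A"
  unfolding pinv_def
proof (rule the_equality)
  have At: "transpose_mat A \<in> carrier_mat n m" using A by simp
  have Bsym: "transpose_mat B = B"
    by (rule inv_transpose_sym[OF _ B BG GB]) (use A in \<open>simp_all add: transpose_mult[of _ n m _ n]\<close>)
  have C: "B * transpose_mat A \<in> carrier_mat n m" using B At by simp
  have 1: "A * (B * transpose_mat A) * A = A"
  proof -
    have "A * (B * transpose_mat A) * A = A * (B * (transpose_mat A * A))"
      using A B At by (simp add: assoc_mult_mat[of _ m n _ n _ m] assoc_mult_mat[of _ n n _ m _ n] assoc_mult_mat[of _ m n _ m _ n])
    also have "\<dots> = A" using BG A by simp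
    finally show ?thesis .
  qed
  have 2: "B * transpose_mat A * A * (B * transpose_mat A) = B * transpose_mat A"
  proof -
    have "B * transpose_mat A * A * (B * transpose_mat A) = (B * (transpose_mat A * A)) * (B * transpose_mat A)"
      using A B At by simp
    also have "\<dots> = B * transpose_mat A" using BG by (simp add: left_mult_one_mat[OF C])
    finally show ?thesis .
  qed
  have 3: "transpose_mat (A * (B * transpose_mat A)) = A * (B * transpose_mat A)"
  proof -
    have "transpose_mat (A * (B * transpose_mat A)) = transpose_mat (B * transpose_mat A) * transpose_mat A"
      using transpose_mult[OF A C] .
    also have "transpose_mat (B * transpose_mat A) = transpose_mat (transpose_mat A) * transpose_mat B"
      using transpose_mult[OF B At] .
    also have "\<dots> = A * B" using Bsym by simp
    finally show ?thesis using A B At by simp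
  qed
  have 4: "transpose_mat (B * transpose_mat A * A) = B * transpose_mat A * A"
  proof -
    have "B * transpose_mat A * A = 1\<^sub>m n" using BG A B At by simp
    then show ?thesis by simp
  qed
  show "B * transpose_mat A \<in> carrier_mat (dim_col A) (dim_row A) \<and> A * (B * transpose_mat A) * A = A \<and>
    B * transpose_mat A * A * (B * transpose_mat A) = B * transpose_mat A \<and>
    transpose_mat (A * (B * transpose_mat A)) = A * (B * transpose_mat A) \<and>
    transpose_mat (B * transpose_mat A * A) = B * transpose_mat A * A"
    using C A 1 2 3 4 by simp
  fix C' assume "C' \<in> carrier_mat (dim_col A) (dim_row A) \<and> A * C' * A = A \<and> C' * A * C' = C' \<and>
    transpose_mat (A * C') = A * C' \<and> transpose_mat (C' * A) = C' * A"
  then have C': "C' \<in> carrier_mat n m" "A * C' * A = A" "transpose_mat (A * C') = A * C'" using A by auto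
  have "transpose_mat A = transpose_mat (A * C' * A)" using C' by simp
  also have "\<dots> = transpose_mat A * transpose_mat (A * C')"
    using transpose_mult[of "A * C'" m m A n] A C' by simp
  also have "\<dots> = transpose_mat A * (A * C')" using C' by simp
  also have "\<dots> = (transpose_mat A * A) * C'" using A At C' by simp
  finally have "transpose_mat A = (transpose_mat A * A) * C'" .
  then have "B * transpose_mat A = B * ((transpose_mat A * A) * C')" by simp
  also have "\<dots> = (B * (transpose_mat A * A)) * C'"
    using A At B C' by (simp add: assoc_mult_mat[of B n n "transpose_mat A * A" n C' m])
  also have "\<dots> = C'" using BG C' by simp
  finally show "C' = B * transpose_mat A" by simp
qed




lemma seq_at0: "filterlim (\<lambda>j. inverse (real (Suc j))) (at (0::real)) sequentially"
  unfolding filterlim_at using LIMSEQ_inverse_real_of_nat by auto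

lemma seq2_at0: "filterlim (\<lambda>j. (inverse (real (Suc j)))\<^sup>2) (at (0::real)) sequentially"
proof -
  have "(\<lambda>j. (inverse (real (Suc j)))\<^sup>2) \<longlonglongrightarrow> 0\<^sup>2"
    by (intro tendsto_power LIMSEQ_inverse_real_of_nat)
  then show ?thesis unfolding filterlim_at by auto
qed

lemma deriv_seq:
  assumes "(F has_real_derivative D) (at 0)"
  shows "(\<lambda>j. (F (inverse (real (Suc j))) - F 0) / inverse (real (Suc j))) \<longlonglongrightarrow> D"
proof -
  have "((\<lambda>h. (F (0 + h) - F 0) / h) \<longlongrightarrow> D) (at 0)"
    using assms unfolding DERIV_def .
  then have "((\<lambda>h. (F h - F 0) / h) \<longlongrightarrow> D) (at 0)" by simp
  from filterlim_compose[OF this seq_at0] show ?thesis by simp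
qed

lemma exp_quot:
  fixes a :: real
  shows "(\<lambda>j. (exp ((inverse (real (Suc j)))\<^sup>2 * a) - 1) / (inverse (real (Suc j)))\<^sup>2) \<longlonglongrightarrow> a"
proof -
  have d: "((\<lambda>s. exp (s * a)) has_real_derivative exp (0 * a) * a) (at 0)"
    by (auto intro!: derivative_eq_intros)
  have "((\<lambda>h. (exp ((0 + h) * a) - exp (0 * a)) / h) \<longlongrightarrow> a) (at 0)"
    using d unfolding DERIV_def by simp
  then have "((\<lambda>h. (exp (h * a) - 1) / h) \<longlongrightarrow> a) (at 0)" by simp
  from filterlim_compose[OF this seq2_at0] show ?thesis by simp
qed

lemma alg_ident:
  fixes n :: nat and la \<alpha> gz e t :: real and \<beta> gi :: "nat \<Rightarrow> real" and X :: "nat \<Rightarrow> nat \<Rightarrow> real"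
  assumes t: "t \<noteq> 0"
  defines "A \<equiv> la * (\<alpha> - (\<Sum>i<n. \<beta> i / t))"
  defines "c \<equiv> \<lambda>i. la * \<beta> i / t"
  shows "2 * (A * gz + (\<Sum>i<n. c i * gi i)) - (A\<^sup>2 * e + 2 * A * (\<Sum>i<n. c i * e) + (\<Sum>i<n. \<Sum>j<n. c i * c j * (e * X i j)))
    = 2 * la * (\<alpha> * gz + (\<Sum>i<n. \<beta> i * ((gi i - gz) / t)))
      - la\<^sup>2 * e * (\<alpha>\<^sup>2 + (\<Sum>i<n. \<Sum>j<n. \<beta> i * \<beta> j * ((X i j - 1) / t\<^sup>2)))"
proof -
  define Sc where "Sc = (\<Sum>i<n. c i)"
  have Sc: "Sc = la * (\<Sum>i<n. \<beta> i / t)"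
    unfolding Sc_def c_def by (simp add: sum_distrib_left)
  have AS: "A + Sc = la * \<alpha>" unfolding A_def Sc by (simp add: algebra_simps)
  have lin: "A * gz + (\<Sum>i<n. c i * gi i) = la * (\<alpha> * gz + (\<Sum>i<n. \<beta> i * ((gi i - gz) / t)))"
  proof -
    have "(\<Sum>i<n. c i * gi i) - Sc * gz = la * (\<Sum>i<n. \<beta> i * ((gi i - gz) / t))"
      unfolding Sc_def c_def
      by (simp add: sum_distrib_left sum_distrib_right sum_subtractf[symmetric] algebra_simps diff_divide_distrib)
    then have "A * gz + (\<Sum>i<n. c i * gi i) = (A + Sc) * gz + la * (\<Sum>i<n. \<beta> i * ((gi i - gz) / t))"
      by (simp add: algebra_simps)
    then show ?thesis unfolding AS by (simp add: algebra_simps)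
  qed
  have sq: "(\<Sum>i<n. \<Sum>j<n. c i * c j) = Sc\<^sup>2"
    unfolding Sc_def by (simp add: power2_eq_square sum_product)
  have dbl: "(\<Sum>i<n. \<Sum>j<n. c i * c j * (e * X i j)) = e * Sc\<^sup>2 + e * (\<Sum>i<n. \<Sum>j<n. c i * c j * (X i j - 1))"
  proof -
    have "(\<Sum>i<n. \<Sum>j<n. c i * c j * (e * X i j)) = e * (\<Sum>i<n. \<Sum>j<n. c i * c j + c i * c j * (X i j - 1))"
      by (simp add: sum_distrib_left algebra_simps)
    also have "\<dots> = e * ((\<Sum>i<n. \<Sum>j<n. c i * c j) + (\<Sum>i<n. \<Sum>j<n. c i * c j * (X i j - 1)))"
      by (simp add: sum.distrib)
    finally show ?thesis unfolding sq by (simp add: algebra_simps)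
  qed
  have cc: "(\<Sum>i<n. \<Sum>j<n. c i * c j * (X i j - 1)) = la\<^sup>2 * (\<Sum>i<n. \<Sum>j<n. \<beta> i * \<beta> j * ((X i j - 1) / t\<^sup>2))"
    unfolding c_def using t by (simp add: sum_distrib_left power2_eq_square algebra_simps)
  have quad: "A\<^sup>2 * e + 2 * A * (\<Sum>i<n. c i * e) + (\<Sum>i<n. \<Sum>j<n. c i * c j * (e * X i j))
      = e * (A + Sc)\<^sup>2 + e * (\<Sum>i<n. \<Sum>j<n. c i * c j * (X i j - 1))"
  proof -
    have "(\<Sum>i<n. c i * e) = Sc * e" unfolding Sc_def by (simp add: sum_distrib_right)
    then show ?thesis unfolding dbl by (simp add: power2_eq_square algebra_simps)
  qed
  show ?thesis unfolding lin quad AS cc by (simp add: power2_eq_square algebra_simps)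
qed




lemma obs_Qm: "H \<in> carrier_mat M N \<Longrightarrow> obs_measure H \<sigma> x = Qm M \<sigma> (\<lambda>l. (H *\<^sub>v x) $ l)"
  unfolding obs_measure_def Qm_def by simp

lemma gram_sum:
  fixes r ci cj :: "real vec"
  assumes r: "r \<in> carrier_vec M" and ci: "ci \<in> carrier_vec M" and cj: "cj \<in> carrier_vec M"
    and cir: "ci \<bullet> r = 0" and cjr: "cj \<bullet> r = 0"
  shows "(\<Sum>l<M. (- (r $ l) + s * ci $ l) * (- (r $ l) + t * cj $ l)) = r \<bullet> r + s * t * (ci \<bullet> cj)"
proof -
  have sp: "\<And>v w :: real vec. w \<in> carrier_vec M \<Longrightarrow> v \<bullet> w = (\<Sum>l<M. v $ l * w $ l)"
    by (simp add: scalar_prod_def atLeast0LessThan)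
  have "(\<Sum>l<M. (- (r $ l) + s * ci $ l) * (- (r $ l) + t * cj $ l))
      = (\<Sum>l<M. r $ l * r $ l + (- t) * (cj $ l * r $ l) + (- s) * (ci $ l * r $ l) + (s * t) * (ci $ l * cj $ l))"
    by (intro sum.cong refl) (simp add: algebra_simps)
  also have "\<dots> = (\<Sum>l<M. r $ l * r $ l) + (- t) * (\<Sum>l<M. cj $ l * r $ l) + (- s) * (\<Sum>l<M. ci $ l * r $ l)
      + (s * t) * (\<Sum>l<M. ci $ l * cj $ l)"
    by (simp only: sum.distrib sum_distrib_left)
  also have "\<dots> = r \<bullet> r + s * t * (ci \<bullet> cj)"
    using cir cjr r cj by (simp add: sp)
  finally show ?thesis .
qed


theorem theorem8:
  fixes N M S k :: nat and H :: "real mat" and \<sigma> :: real and x0 :: "real vec"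
    and K :: "nat set" and c :: "real vec \<Rightarrow> real" and dc :: "nat \<Rightarrow> real"
  assumes "1 \<le> S" "S \<le> N"
    and "H \<in> carrier_mat M N"
    and "enat S < spark H"
    and "\<sigma> > 0"
    and "k < N"
    and "x0 \<in> sparse_set N S"
    and "K \<subseteq> {..<N}" "card K \<le> S"
  defines "P \<equiv> cols_sub H K * pinv (cols_sub H K)"
  defines "xt \<equiv> THE xt. xt \<in> carrier_vec N \<and> supp_vec xt \<subseteq> K \<and> H *\<^sub>v xt = P *\<^sub>v (H *\<^sub>v x0)"
  assumes "\<forall>i < card K. ((\<lambda>t. c (xt + t \<cdot>\<^sub>v unit_vec N (sorted_list_of_set K ! i)))
              has_real_derivative dc i) (at 0)"
  defines "\<gamma> \<equiv> (\<lambda>x. c x + x $ k)"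
  defines "b \<equiv> vec (card K) (\<lambda>i. (if k = sorted_list_of_set K ! i then 1 else 0) + dc i)"
  defines "r \<equiv> (1\<^sub>m M - P) *\<^sub>v (H *\<^sub>v x0)"
  shows "min_var H \<sigma> S k c x0 \<ge>
    ereal (exp (- (scalar_prod r r) / \<sigma>\<^sup>2)
      * (\<sigma>\<^sup>2 * (scalar_prod b (mat_inv (transpose_mat (cols_sub H K) * cols_sub H K) *\<^sub>v b)) + (\<gamma> xt)\<^sup>2)
      - (\<gamma> x0)\<^sup>2)"
proof -
  note H = assms(3) and sp = assms(4) and s = assms(5) and kN = assms(6) and x0s = assms(7)
    and KN = assms(8) and cK = assms(9) and dcd = assms(12)
  have finK: "finite K" using KN finite_subset by blast
  define ks where "ks = sorted_list_of_set K"
  define n where "n = card K"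
  have lks: "length ks = n" unfolding ks_def n_def by simp
  have sks: "set ks = K" unfolding ks_def using finK by simp
  have dks: "distinct ks" unfolding ks_def by simp
  have ksK: "ks ! i \<in> K" if "i < n" for i using that lks sks nth_mem by blast
  have ksN: "ks ! i < N" if "i < n" for i using ksK[OF that] KN by auto
  have ksN': "set ks \<subseteq> {..<N}" using sks KN by simp
  define HK where "HK = cols_sub H K"
  have HK_eq: "HK = mat M n (\<lambda>(r, j). H $$ (r, ks ! j))"
    unfolding HK_def cols_sub_def ks_def n_def using H by simp
  have HKc: "HK \<in> carrier_mat M n" unfolding HK_eq by simp
  have HKt: "transpose_mat HK \<in> carrier_mat n M" using HKc by simp
  have sparse_of: "x \<in> sparse_set N S" if "x \<in> carrier_vec N" "supp_vec x \<subseteq> K" for x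
  proof -
    have "card (supp_vec x) \<le> card K" using that(2) finK by (rule card_mono[rotated])
    then show ?thesis using that(1) cK unfolding sparse_set_def by simp
  qed
  have Hemb: "H *\<^sub>v emb N ks \<theta> = HK *\<^sub>v \<theta>" if "\<theta> \<in> carrier_vec n" for \<theta>
    using emb_mult[OF H ksN', of \<theta>] that lks unfolding HK_eq by simp
  have inj: "\<theta> = 0\<^sub>v n" if th: "\<theta> \<in> carrier_vec n" and z: "HK *\<^sub>v \<theta> = 0\<^sub>v M" for \<theta>
  proof -
    have "card (supp_vec (emb N ks \<theta>)) \<le> S"
      using sparse_of[of "emb N ks \<theta>"] supp_emb[of N ks \<theta>] sks unfolding sparse_set_def by auto
    then have e0: "emb N ks \<theta> = 0\<^sub>v N"
      using spark_zero[OF H sp, of "emb N ks \<theta>"] Hemb[OF th] z by simp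
    show ?thesis
    proof (rule eq_vecI)
      fix i assume "i < dim_vec (0\<^sub>v n :: real vec)"
      then have i: "i < n" by simp
      have "\<theta> $ i = emb N ks \<theta> $ (ks ! i)" using emb_nth[OF dks, of i N \<theta>] i lks ksN by simp
      then show "\<theta> $ i = 0\<^sub>v n $ i" using e0 i ksN by simp
    qed (use th in simp)
  qed
  obtain B where B: "B \<in> carrier_mat n n" and BG: "B * (transpose_mat HK * HK) = 1\<^sub>m n"
    and GB: "(transpose_mat HK * HK) * B = 1\<^sub>m n"
    using gram_inv_exists[OF HKc inj] by blast
  define G where "G = transpose_mat HK * HK"
  have Gc: "G \<in> carrier_mat n n" unfolding G_def using HKc by simp
  have minv: "mat_inv G = B" unfolding G_def using mat_inv_eq[OF _ B BG GB] HKc by simp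
  have Gsym: "transpose_mat G = G" unfolding G_def using transpose_mult[OF HKt HKc] by simp
  have Bsym: "transpose_mat B = B" using inv_transpose_sym[OF Gc B _ _ Gsym] BG GB unfolding G_def by simp
  have Peq: "P = HK * (B * transpose_mat HK)"
    unfolding P_def HK_def[symmetric] using pinv_eq[OF HKc B BG GB] by simp
  have Pc: "P \<in> carrier_mat M M" unfolding Peq using HKc B by simp
  have x0c: "x0 \<in> carrier_vec N" using x0s unfolding sparse_set_def by simp
  define u where "u = H *\<^sub>v x0"
  have uc: "u \<in> carrier_vec M" unfolding u_def using H x0c by simp
  define \<theta>t where "\<theta>t = B *\<^sub>v (transpose_mat HK *\<^sub>v u)"
  have \<theta>tc: "\<theta>t \<in> carrier_vec n" unfolding \<theta>t_def using B HKt uc by simp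
  have HK\<theta>t: "HK *\<^sub>v \<theta>t = P *\<^sub>v u"
    unfolding \<theta>t_def Peq using HKc B HKt uc
    by (simp add: assoc_mult_mat_vec[of HK M n "B * transpose_mat HK" M u] assoc_mult_mat_vec[of B n n "transpose_mat HK" M u])
  have xt_eq: "xt = emb N ks \<theta>t"
    unfolding xt_def u_def[symmetric]
  proof (rule the_equality)
    show "emb N ks \<theta>t \<in> carrier_vec N \<and> supp_vec (emb N ks \<theta>t) \<subseteq> K \<and> H *\<^sub>v emb N ks \<theta>t = P *\<^sub>v u"
      using supp_emb[of N ks \<theta>t] sks Hemb[OF \<theta>tc] HK\<theta>t by simp
    fix x' assume x': "x' \<in> carrier_vec N \<and> supp_vec x' \<subseteq> K \<and> H *\<^sub>v x' = P *\<^sub>v u"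
    define d where "d = x' - emb N ks \<theta>t"
    have dc: "d \<in> carrier_vec N" unfolding d_def using x' by simp
    have Hd: "H *\<^sub>v d = 0\<^sub>v M"
      unfolding d_def using x' H Hemb[OF \<theta>tc] HK\<theta>t Pc uc
      by (simp add: mult_minus_distrib_mat_vec[OF H])
    have "supp_vec d \<subseteq> K"
    proof
      fix j assume j: "j \<in> supp_vec d"
      then have jN: "j < N" and nz: "d $ j \<noteq> 0" using dc unfolding supp_vec_def by auto
      show "j \<in> K"
      proof (rule ccontr)
        assume "j \<notin> K"
        then have "x' $ j = 0" "emb N ks \<theta>t $ j = 0"
          using x' supp_emb[of N ks \<theta>t] sks jN unfolding supp_vec_def by auto
        then show False using nz jN x' unfolding d_def by simp
      qed
    qed
    then have "card (supp_vec d) \<le> S" using sparse_of[OF dc] unfolding sparse_set_def by simp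
    then have d0: "d = 0\<^sub>v N" using spark_zero[OF H sp dc Hd] by simp
    show "x' = emb N ks \<theta>t"
    proof (rule eq_vecI)
      fix j assume "j < dim_vec (emb N ks \<theta>t)"
      then have "j < N" by simp
      then have "(x' - emb N ks \<theta>t) $ j = 0" using d0 unfolding d_def by simp
      then show "x' $ j = emb N ks \<theta>t $ j" using \<open>j < N\<close> by simp
    qed (use x' in simp)
  qed
  have xtc: "xt \<in> carrier_vec N" unfolding xt_eq by simp
  have Hxt: "H *\<^sub>v xt = P *\<^sub>v u" unfolding xt_eq using Hemb[OF \<theta>tc] HK\<theta>t by simp
  have xtK: "supp_vec xt \<subseteq> K" unfolding xt_eq using supp_emb[of N ks \<theta>t] sks by simp
  have r_eq: "r = u - P *\<^sub>v u"
    unfolding r_def u_def[symmetric] using Pc uc by (simp add: minus_mult_distrib_mat_vec[of _ M M])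
  have rc: "r \<in> carrier_vec M" unfolding r_eq using Pc uc by simp
  have TP: "transpose_mat HK * P = transpose_mat HK"
  proof -
    have "transpose_mat HK * P = (transpose_mat HK * HK) * (B * transpose_mat HK)"
      unfolding Peq using HKc HKt B by (simp add: assoc_mult_mat[of "transpose_mat HK" n M HK n "B * transpose_mat HK" M])
    also have "\<dots> = ((transpose_mat HK * HK) * B) * transpose_mat HK"
      by (rule assoc_mult_mat[symmetric]) (use HKc HKt B in auto)
    also have "\<dots> = transpose_mat HK" using GB HKt by simp
    finally show ?thesis .
  qed
  have Puc: "P *\<^sub>v u \<in> carrier_vec M" using Pc uc by simp
  have HKtr: "transpose_mat HK *\<^sub>v r = 0\<^sub>v n"
  proof -
    have "transpose_mat HK *\<^sub>v r = transpose_mat HK *\<^sub>v u - transpose_mat HK *\<^sub>v (P *\<^sub>v u)"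
      unfolding r_eq by (rule mult_minus_distrib_mat_vec[OF HKt uc Puc])
    also have "transpose_mat HK *\<^sub>v (P *\<^sub>v u) = (transpose_mat HK * P) *\<^sub>v u"
      using assoc_mult_mat_vec[OF HKt Pc uc] by simp
    also have "\<dots> = transpose_mat HK *\<^sub>v u" unfolding TP ..
    finally show ?thesis using HKt uc by simp
  qed
  define cv where "cv i = col HK i" for i
  have cvc: "cv i \<in> carrier_vec M" for i unfolding cv_def carrier_vec_def col_def using HKc by simp
  have cvr: "cv i \<bullet> r = 0" if "i < n" for i
  proof -
    have "(transpose_mat HK *\<^sub>v r) $ i = cv i \<bullet> r"
      using that HKc unfolding cv_def by simp
    then show ?thesis using HKtr that by simp
  qed
  have cvcv: "cv i \<bullet> cv j = G $$ (i, j)" if "i < n" "j < n" for i j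
    using that HKc unfolding cv_def G_def by simp
  have Hunit: "H *\<^sub>v unit_vec N (ks ! i) = cv i" if i: "i < n" for i
  proof (rule eq_vecI)
    fix l assume "l < dim_vec (cv i)"
    then have l: "l < M" using cvc[of i] by simp
    have "(H *\<^sub>v unit_vec N (ks ! i)) $ l = H $$ (l, ks ! i)"
      using H l ksN[OF i] by simp
    also have "\<dots> = cv i $ l" unfolding cv_def HK_eq using l i by simp
    finally show "(H *\<^sub>v unit_vec N (ks ! i)) $ l = cv i $ l" .
  qed (use H in \<open>simp add: cv_def HK_eq\<close>)
  define pt where "pt i t = xt + t \<cdot>\<^sub>v unit_vec N (ks ! i)" for i t
  have ptc: "pt i t \<in> carrier_vec N" for i t unfolding pt_def using xtc by simp
  have ptK: "supp_vec (pt i t) \<subseteq> K" if i: "i < n" for i t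
  proof
    fix j assume j: "j \<in> supp_vec (pt i t)"
    then have jN: "j < N" and nz: "pt i t $ j \<noteq> 0" using ptc[of i t] unfolding supp_vec_def by auto
    show "j \<in> K"
    proof (rule ccontr)
      assume jK: "j \<notin> K"
      then have "xt $ j = 0" using xtK xtc jN unfolding supp_vec_def by auto
      moreover have "j \<noteq> ks ! i" using jK ksK[OF i] by auto
      ultimately show False using nz jN ksN[OF i] unfolding pt_def by simp
    qed
  qed
  have Hpt: "H *\<^sub>v pt i t = P *\<^sub>v u + t \<cdot>\<^sub>v cv i" if i: "i < n" for i t
    unfolding pt_def using H xtc Hxt Hunit[OF i]
    by (simp add: mult_add_distrib_mat_vec[OF H] mult_mat_vec[OF H])
  have pt0: "pt i 0 = xt" for i
    unfolding pt_def by (rule eq_vecI) (use xtc in auto)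
  have rl: "r $ l = u $ l - (P *\<^sub>v u) $ l" if "l < M" for l
    unfolding r_eq using that carrier_vecD[OF Puc] by simp
  have mdiff: "(H *\<^sub>v pt i t) $ l - u $ l = - (r $ l) + t * cv i $ l" if "i < n" "l < M" for i t l
    using Hpt[OF that(1)] rl[OF that(2)] that(2) carrier_vecD[OF cvc[of i]] carrier_vecD[OF Puc] by simp
  have mdiff0: "(H *\<^sub>v xt) $ l - u $ l = - (r $ l) + 0 * cv i $ l" if "l < M" for i l
    using Hxt rl[OF that] by simp
  define R where "R = r \<bullet> r"
  define m where "m = (\<lambda>l. u $ l)"
  define Ef where "Ef = (\<lambda>a b. exp ((\<Sum>l<M. (a l - m l) * (b l - m l)) / \<sigma>\<^sup>2))"
  have E00: "Ef (\<lambda>l. (H *\<^sub>v xt) $ l) (\<lambda>l. (H *\<^sub>v xt) $ l) = exp (R / \<sigma>\<^sup>2)"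
  proof -
    have "(\<Sum>l<M. ((H *\<^sub>v xt) $ l - m l) * ((H *\<^sub>v xt) $ l - m l))
        = (\<Sum>l<M. r $ l * r $ l)"
      unfolding m_def by (intro sum.cong refl) (simp add: mdiff0[of _ 0])
    also have "\<dots> = R" unfolding R_def using rc by (simp add: scalar_prod_def atLeast0LessThan)
    finally show ?thesis unfolding Ef_def by simp
  qed
  have E0i: "Ef (\<lambda>l. (H *\<^sub>v xt) $ l) (\<lambda>l. (H *\<^sub>v pt i t) $ l) = exp (R / \<sigma>\<^sup>2)" if i: "i < n" for i t
  proof -
    have "(\<Sum>l<M. ((H *\<^sub>v xt) $ l - m l) * ((H *\<^sub>v pt i t) $ l - m l))
        = (\<Sum>l<M. (- (r $ l) + 0 * cv i $ l) * (- (r $ l) + t * cv i $ l))"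
      unfolding m_def by (intro sum.cong refl) (simp add: mdiff0[of _ i] mdiff[OF i])
    also have "\<dots> = r \<bullet> r + 0 * t * (cv i \<bullet> cv i)" by (rule gram_sum[OF rc cvc cvc cvr[OF i] cvr[OF i]])
    also have "\<dots> = R" unfolding R_def by simp
    finally show ?thesis unfolding Ef_def by simp
  qed
  have Eij: "Ef (\<lambda>l. (H *\<^sub>v pt i t) $ l) (\<lambda>l. (H *\<^sub>v pt j t) $ l) = exp (R / \<sigma>\<^sup>2) * exp (t\<^sup>2 * (G $$ (i, j) / \<sigma>\<^sup>2))"
    if i: "i < n" and j: "j < n" for i j t
  proof -
    have "(\<Sum>l<M. ((H *\<^sub>v pt i t) $ l - m l) * ((H *\<^sub>v pt j t) $ l - m l))
        = (\<Sum>l<M. (- (r $ l) + t * cv i $ l) * (- (r $ l) + t * cv j $ l))"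
      unfolding m_def by (intro sum.cong refl) (simp add: mdiff[OF i] mdiff[OF j])
    also have "\<dots> = r \<bullet> r + t * t * (cv i \<bullet> cv j)" by (rule gram_sum[OF rc cvc cvc cvr[OF i] cvr[OF j]])
    also have "\<dots> = R + t * t * G $$ (i, j)" unfolding R_def cvcv[OF i j] ..
    finally show ?thesis unfolding Ef_def
      by (simp add: mult_exp_exp[symmetric] add_divide_distrib power2_eq_square)
  qed
  define la where "la = exp (- R / \<sigma>\<^sup>2)"
  define e where "e = exp (R / \<sigma>\<^sup>2)"
  have la_e: "la * e = 1" unfolding la_def e_def by (simp add: mult_exp_exp add_divide_distrib[symmetric])
  have s2: "\<sigma>\<^sup>2 \<noteq> 0" using s by simp
  have bc: "b \<in> carrier_vec n" unfolding b_def n_def by simp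
  define w where "w = B *\<^sub>v b"
  have wc: "w \<in> carrier_vec n" unfolding w_def using B bc by simp
  define q where "q = b \<bullet> w"
  define \<beta> where "\<beta> i = \<sigma>\<^sup>2 * w $ i" for i
  have GB': "G * B = 1\<^sub>m n" using GB unfolding G_def .
  have Gw: "G *\<^sub>v w = b"
  proof -
    have "G *\<^sub>v w = (G * B) *\<^sub>v b" unfolding w_def using Gc B bc by simp
    then show ?thesis using GB' bc by simp
  qed
  have qsum: "q = (\<Sum>i<n. b $ i * w $ i)"
    unfolding q_def using wc by (simp add: scalar_prod_def atLeast0LessThan)
  have sum1: "(\<Sum>i<n. \<beta> i * b $ i) = \<sigma>\<^sup>2 * q"
    unfolding qsum \<beta>_def by (simp add: sum_distrib_left algebra_simps)
  have inner: "(\<Sum>j<n. G $$ (i, j) * w $ j) = b $ i" if "i < n" for i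
  proof -
    have "(G *\<^sub>v w) $ i = (\<Sum>j<n. G $$ (i, j) * w $ j)"
      using that Gc wc by (simp add: scalar_prod_def atLeast0LessThan)
    then show ?thesis using Gw by simp
  qed
  have sum2: "(\<Sum>i<n. \<Sum>j<n. \<beta> i * \<beta> j * (G $$ (i, j) / \<sigma>\<^sup>2)) = \<sigma>\<^sup>2 * q"
  proof -
    have "(\<Sum>i<n. \<Sum>j<n. \<beta> i * \<beta> j * (G $$ (i, j) / \<sigma>\<^sup>2)) = (\<Sum>i<n. \<sigma>\<^sup>2 * w $ i * (\<Sum>j<n. G $$ (i, j) * w $ j))"
      unfolding \<beta>_def using s2 by (simp add: sum_distrib_left power2_eq_square algebra_simps)
    also have "\<dots> = (\<Sum>i<n. \<sigma>\<^sup>2 * (b $ i * w $ i))"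
      by (intro sum.cong refl) (simp add: inner)
    also have "\<dots> = \<sigma>\<^sup>2 * q" unfolding qsum by (simp add: sum_distrib_left)
    finally show ?thesis .
  qed
  have tgt: "exp (- (r \<bullet> r) / \<sigma>\<^sup>2) * (\<sigma>\<^sup>2 * (b \<bullet> (mat_inv (transpose_mat HK * HK) *\<^sub>v b)) + (\<gamma> xt)\<^sup>2) - (\<gamma> x0)\<^sup>2
      = la * (\<sigma>\<^sup>2 * q + (\<gamma> xt)\<^sup>2) - (\<gamma> x0)\<^sup>2"
    unfolding la_def R_def q_def w_def using minv unfolding G_def by simp
  have dimc: "dim_col H = N" using H by simp
  have xts: "xt \<in> sparse_set N S" using sparse_of[OF xtc xtK] .
  have pts: "pt i t \<in> sparse_set N S" if "i < n" for i t using sparse_of[OF ptc ptK[OF that]] .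
  have Hx0: "(\<lambda>l. (H *\<^sub>v x0) $ l) = m" unfolding m_def u_def ..
  show ?thesis unfolding HK_def[symmetric] tgt min_var_def
  proof (rule INF_greatest)
    fix g assume g: "g \<in> admissible_est H \<sigma> S k c x0"
    have gm: "g \<in> borel_measurable (Qm M \<sigma> m)" and g2: "integrable (Qm M \<sigma> m) (\<lambda>y. (g y)\<^sup>2)"
      using g unfolding admissible_est_def obs_Qm[OF H] Hx0 by auto
    have gE: "integrable (Qm M \<sigma> (\<lambda>l. (H *\<^sub>v x) $ l)) g \<and> (\<integral>y. g y \<partial>Qm M \<sigma> (\<lambda>l. (H *\<^sub>v x) $ l)) = \<gamma> x"
      if "x \<in> sparse_set N S" for x
      using g that unfolding admissible_est_def obs_Qm[OF H] expect_def \<gamma>_def dimc by auto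
    define V where "V = (\<integral>y. (g y)\<^sup>2 \<partial>Qm M \<sigma> m)"
    define tt where "tt j = inverse (real (Suc j))" for j
    define F where "F j = 2 * la * (\<gamma> xt * \<gamma> xt + (\<Sum>i<n. \<beta> i * ((\<gamma> (pt i (tt j)) - \<gamma> xt) / tt j)))
      - la\<^sup>2 * e * ((\<gamma> xt)\<^sup>2 + (\<Sum>i<n. \<Sum>i'<n. \<beta> i * \<beta> i' * ((exp ((tt j)\<^sup>2 * (G $$ (i, i') / \<sigma>\<^sup>2)) - 1) / (tt j)\<^sup>2)))" for j
    have Fle: "F j \<le> V" for j
    proof -
      define t where "t = tt j"
      have t0: "t \<noteq> 0" unfolding t_def tt_def by simp
      define A where "A = la * (\<gamma> xt - (\<Sum>i<n. \<beta> i / t))"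
      define cc where "cc i = la * \<beta> i / t" for i
      have qb: "V \<ge> 2 * (A * (\<integral>y. g y \<partial>Qm M \<sigma> (\<lambda>l. (H *\<^sub>v xt) $ l))
             + (\<Sum>i<n. cc i * (\<integral>y. g y \<partial>Qm M \<sigma> (\<lambda>l. (H *\<^sub>v pt i t) $ l))))
          - (A\<^sup>2 * Ef (\<lambda>l. (H *\<^sub>v xt) $ l) (\<lambda>l. (H *\<^sub>v xt) $ l)
             + 2 * A * (\<Sum>i<n. cc i * Ef (\<lambda>l. (H *\<^sub>v xt) $ l) (\<lambda>l. (H *\<^sub>v pt i t) $ l))
             + (\<Sum>i<n. \<Sum>j<n. cc i * cc j * Ef (\<lambda>l. (H *\<^sub>v pt i t) $ l) (\<lambda>l. (H *\<^sub>v pt j t) $ l)))"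
        unfolding V_def Ef_def
        by (rule quad_bound[OF s gm g2 conjunct1[OF gE[OF xts]] conjunct1[OF gE[OF pts]]])
      have i1: "(\<Sum>i<n. cc i * (\<integral>y. g y \<partial>Qm M \<sigma> (\<lambda>l. (H *\<^sub>v pt i t) $ l))) = (\<Sum>i<n. cc i * \<gamma> (pt i t))"
        by (intro sum.cong refl) (simp add: gE[OF pts])
      have i2: "(\<Sum>i<n. cc i * Ef (\<lambda>l. (H *\<^sub>v xt) $ l) (\<lambda>l. (H *\<^sub>v pt i t) $ l)) = (\<Sum>i<n. cc i * e)"
        by (intro sum.cong refl) (simp add: E0i e_def)
      have i3: "(\<Sum>i<n. \<Sum>j<n. cc i * cc j * Ef (\<lambda>l. (H *\<^sub>v pt i t) $ l) (\<lambda>l. (H *\<^sub>v pt j t) $ l))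
          = (\<Sum>i<n. \<Sum>j<n. cc i * cc j * (e * exp (t\<^sup>2 * (G $$ (i, j) / \<sigma>\<^sup>2))))"
        by (intro sum.cong refl) (simp add: Eij e_def)
      have qb2: "V \<ge> 2 * (A * \<gamma> xt + (\<Sum>i<n. cc i * \<gamma> (pt i t)))
          - (A\<^sup>2 * e + 2 * A * (\<Sum>i<n. cc i * e) + (\<Sum>i<n. \<Sum>j<n. cc i * cc j * (e * exp (t\<^sup>2 * (G $$ (i, j) / \<sigma>\<^sup>2)))))"
        using qb unfolding i1 i2 i3 E00 gE[OF xts, THEN conjunct2] e_def[symmetric] .
      have alg: "2 * (A * \<gamma> xt + (\<Sum>i<n. cc i * \<gamma> (pt i t)))
          - (A\<^sup>2 * e + 2 * A * (\<Sum>i<n. cc i * e) + (\<Sum>i<n. \<Sum>j<n. cc i * cc j * (e * exp (t\<^sup>2 * (G $$ (i, j) / \<sigma>\<^sup>2)))))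
          = F j"
        unfolding F_def t_def[symmetric] A_def cc_def
        using alg_ident[OF t0, where la=la and \<alpha>="\<gamma> xt" and n=n and \<beta>=\<beta> and gz="\<gamma> xt" and gi="\<lambda>i. \<gamma> (pt i t)" and e=e and X="\<lambda>i j. exp (t\<^sup>2 * (G $$ (i, j) / \<sigma>\<^sup>2))"]
        by (simp add: power2_eq_square)
      show ?thesis using qb2 alg by simp
    qed
    have lim1: "(\<lambda>j. (\<gamma> (pt i (tt j)) - \<gamma> xt) / tt j) \<longlonglongrightarrow> b $ i" if i: "i < n" for i
    proof -
      define \<delta> where "\<delta> = (if k = ks ! i then 1 else (0::real))"
      define F' where "F' t = c (xt + t \<cdot>\<^sub>v unit_vec N (ks ! i))" for t
      have F'0: "F' 0 = c xt" unfolding F'_def using pt0[of i] unfolding pt_def by simp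
      have der: "(F' has_real_derivative dc i) (at 0)"
        unfolding F'_def ks_def using dcd i unfolding n_def by auto
      have eq: "(\<gamma> (pt i t) - \<gamma> xt) / t = (F' t - F' 0) / t + \<delta>" if t: "t \<noteq> 0" for t
      proof -
        have "pt i t $ k = xt $ k + t * \<delta>"
          unfolding pt_def \<delta>_def using kN ksN[OF i] xtc by simp
        then have "\<gamma> (pt i t) - \<gamma> xt = (F' t - F' 0) + t * \<delta>"
          unfolding \<gamma>_def F'0 unfolding F'_def pt_def by simp
        then show ?thesis using t by (simp add: add_divide_distrib)
      qed
      have "(\<lambda>j. (F' (tt j) - F' 0) / tt j + \<delta>) \<longlonglongrightarrow> dc i + \<delta>"
        using deriv_seq[OF der] unfolding tt_def by (intro tendsto_add tendsto_const)
      moreover have "(\<lambda>j. (\<gamma> (pt i (tt j)) - \<gamma> xt) / tt j) = (\<lambda>j. (F' (tt j) - F' 0) / tt j + \<delta>)"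
        using eq unfolding tt_def by auto
      moreover have "b $ i = dc i + \<delta>" unfolding b_def \<delta>_def ks_def using i unfolding n_def by simp
      ultimately show ?thesis by simp
    qed
    have lim2: "(\<lambda>j. (exp ((tt j)\<^sup>2 * a) - 1) / (tt j)\<^sup>2) \<longlonglongrightarrow> a" for a
      unfolding tt_def by (rule exp_quot)
    define Finf where "Finf = 2 * la * (\<gamma> xt * \<gamma> xt + (\<Sum>i<n. \<beta> i * b $ i))
      - la\<^sup>2 * e * ((\<gamma> xt)\<^sup>2 + (\<Sum>i<n. \<Sum>i'<n. \<beta> i * \<beta> i' * (G $$ (i, i') / \<sigma>\<^sup>2)))"
    have L1: "(\<lambda>j. \<Sum>i<n. \<beta> i * ((\<gamma> (pt i (tt j)) - \<gamma> xt) / tt j)) \<longlonglongrightarrow> (\<Sum>i<n. \<beta> i * b $ i)"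
      by (rule tendsto_sum, rule tendsto_mult, rule tendsto_const, rule lim1) simp
    have L2: "(\<lambda>j. \<Sum>i<n. \<Sum>i'<n. \<beta> i * \<beta> i' * ((exp ((tt j)\<^sup>2 * (G $$ (i, i') / \<sigma>\<^sup>2)) - 1) / (tt j)\<^sup>2))
        \<longlonglongrightarrow> (\<Sum>i<n. \<Sum>i'<n. \<beta> i * \<beta> i' * (G $$ (i, i') / \<sigma>\<^sup>2))"
      by (rule tendsto_sum, rule tendsto_sum, rule tendsto_mult, rule tendsto_const, rule lim2)
    have Flim: "F \<longlonglongrightarrow> Finf"
      unfolding F_def Finf_def
      by (intro tendsto_diff tendsto_mult tendsto_add tendsto_const L1 L2)
    have "Finf \<le> V" by (rule LIMSEQ_le_const2[OF Flim]) (use Fle in auto)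
    moreover have "Finf = la * (\<sigma>\<^sup>2 * q + (\<gamma> xt)\<^sup>2)"
    proof -
      have "Finf = 2 * la * ((\<gamma> xt)\<^sup>2 + \<sigma>\<^sup>2 * q) - (la * e) * la * ((\<gamma> xt)\<^sup>2 + \<sigma>\<^sup>2 * q)"
        unfolding Finf_def sum1 sum2 by (simp add: power2_eq_square algebra_simps)
      then show ?thesis unfolding la_e by (simp add: algebra_simps)
    qed
    ultimately have main: "la * (\<sigma>\<^sup>2 * q + (\<gamma> xt)\<^sup>2) \<le> V" by simp
    interpret PQ: prob_space "Qm M \<sigma> m" by (rule prob_space_Qm[OF s])
    have g0: "integrable (Qm M \<sigma> m) g" "(\<integral>y. g y \<partial>Qm M \<sigma> m) = \<gamma> x0"
      using gE[OF x0s] unfolding Hx0 by auto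
    have var: "est_variance H \<sigma> x0 g = V - (\<gamma> x0)\<^sup>2"
    proof -
      have ex: "expect H \<sigma> x0 g = \<gamma> x0" unfolding expect_def obs_Qm[OF H] Hx0 using g0 by simp
      have "est_variance H \<sigma> x0 g = (\<integral>y. (g y)\<^sup>2 + (- 2 * \<gamma> x0) * g y + (\<gamma> x0)\<^sup>2 \<partial>Qm M \<sigma> m)"
        unfolding est_variance_def ex obs_Qm[OF H] Hx0 by (simp add: power2_eq_square algebra_simps)
      also have "\<dots> = V + (- 2 * \<gamma> x0) * \<gamma> x0 + (\<gamma> x0)\<^sup>2"
        unfolding V_def using g0 g2 PQ.prob_space
        by (simp add: Bochner_Integration.integral_add Bochner_Integration.integrable_add)
      finally show ?thesis by (simp add: power2_eq_square)
    qed
    show "ereal (la * (\<sigma>\<^sup>2 * q + (\<gamma> xt)\<^sup>2) - (\<gamma> x0)\<^sup>2) \<le> ereal (est_variance H \<sigma> x0 g)"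
      unfolding var using main by simp
  qed
qed


end
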